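(* Let $\mathcal F=(f_t)$ be a continuous flow on a compact metric space $(X,d)$, and suppose $\nu$ is an $(\mathcal F\times\mathcal F)$-invariant Borel probability measure on $X\times X$ which is product expansive at scale $\varepsilon$. Let $\gamma\in(0,\varepsilon/2)$ and for each $t>0$ let $\mathscr A_t$ be a partition adapted to a $(t,\gamma)$-separated set of maximal cardinality. Let $Q\subset X\times X$ be a measurable set with $(f_t\times f_s)Q=Q$ for all $t,s\in\mathbb{R}$. Then for every $\alpha>0$ there exists $t_0$ such that for every $t\ge t_0$ there is a set $U$ which is a union of elements of $\mathscr A_t$ with $\nu(U\triangle Q)<\alpha$.
   Context: $X\times X$ has metric $\tilde d((x,y),(w,z))=\max\{d(x,w),d(y,z)\}$ and product flow $(f_t\times f_t)$; Bowen balls $B_t(p,r)=\{q:\tilde d((f_s\times f_s)p,(f_s\times f_s)q)<r\ \forall s\in[0,t]\}$. A partition $\mathscr A$ is adapted to a maximal $(t,\gamma)$-separated set $E$ if each element $A$ satisfies $B_t(p,\gamma/2)\subset A\subset\overline{B_t}(p,\gamma)$ for some $p\in E$. Product expansive at scale $\varepsilon$: $\nu(\mathrm{NE}^\times(\varepsilon))=0$, where $\Gamma_\varepsilon(x,y)=\{(x',y'):\tilde d((f_tx,f_ty),(f_tx',f_ty'))<\varepsilon\ \forall t\in\mathbb{R}\}$ and $\mathrm{NE}^\times(\varepsilon)=\{(x,y):\Gamma_\varepsilon(x,y)\not\subset f_{[-s,s]}(x)\times f_{[-s,s]}(y)\text{ for any }s>0\}$, with $f_{[-s,s]}(x)=\{f_rx:r\in[-s,s]\}$.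 *)

theory Defs
  imports "HOL-Probability.Probability"
begin

definition continuous_flow :: "(real \<Rightarrow> 'a::metric_space \<Rightarrow> 'a) \<Rightarrow> bool" where
  "continuous_flow f \<longleftrightarrow>
     continuous_on UNIV (\<lambda>(t, x). f t x) \<and>
     (\<forall>x. f 0 x = x) \<and> (\<forall>s t x. f (s + t) x = f s (f t x))"

definition dprod :: "'a::metric_space \<times> 'a \<Rightarrow> 'a \<times> 'a \<Rightarrow> real" where
  "dprod p q = max (dist (fst p) (fst q)) (dist (snd p) (snd q))"

definition pflow :: "(real \<Rightarrow> 'a \<Rightarrow> 'a) \<Rightarrow> real \<Rightarrow> 'a \<times> 'a \<Rightarrow> 'a \<times> 'a" where
  "pflow f t p = (f t (fst p), f t (snd p))"

definition bowen_ball :: "(real \<Rightarrow> 'a::metric_space \<Rightarrow> 'a) \<Rightarrow> real \<Rightarrow> 'a \<times> 'a \<Rightarrow> real \<Rightarrow> ('a \<times> 'a) set" where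
  "bowen_ball f t p r = {q. \<forall>s\<in>{0..t}. dprod (pflow f s p) (pflow f s q) < r}"

definition closed_bowen_ball :: "(real \<Rightarrow> 'a::metric_space \<Rightarrow> 'a) \<Rightarrow> real \<Rightarrow> 'a \<times> 'a \<Rightarrow> real \<Rightarrow> ('a \<times> 'a) set" where
  "closed_bowen_ball f t p r = {q. \<forall>s\<in>{0..t}. dprod (pflow f s p) (pflow f s q) \<le> r}"

definition separated :: "(real \<Rightarrow> 'a::metric_space \<Rightarrow> 'a) \<Rightarrow> real \<Rightarrow> real \<Rightarrow> ('a \<times> 'a) set \<Rightarrow> bool" where
  "separated f t \<gamma> E \<longleftrightarrow>
     (\<forall>p\<in>E. \<forall>q\<in>E. p \<noteq> q \<longrightarrow> (\<exists>s\<in>{0..t}. dprod (pflow f s p) (pflow f s q) > \<gamma>))"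

definition max_card_separated :: "(real \<Rightarrow> 'a::metric_space \<Rightarrow> 'a) \<Rightarrow> real \<Rightarrow> real \<Rightarrow> ('a \<times> 'a) set \<Rightarrow> bool" where
  "max_card_separated f t \<gamma> E \<longleftrightarrow> separated f t \<gamma> E \<and> finite E \<and>
     (\<forall>E'. separated f t \<gamma> E' \<longrightarrow> finite E' \<and> card E' \<le> card E)"

definition adapted_partition :: "(real \<Rightarrow> 'a::metric_space \<Rightarrow> 'a) \<Rightarrow> real \<Rightarrow> real \<Rightarrow> ('a \<times> 'a) set \<Rightarrow> ('a \<times> 'a) set set \<Rightarrow> bool" where
  "adapted_partition f t \<gamma> E \<A> \<longleftrightarrow>
     \<Union>\<A> = UNIV \<and>
     (\<forall>A\<in>\<A>. \<forall>B\<in>\<A>. A \<noteq> B \<longrightarrow> A \<inter> B = {}) \<and>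
     (\<forall>A\<in>\<A>. A \<in> sets borel) \<and>
     (\<forall>A\<in>\<A>. \<exists>p\<in>E. bowen_ball f t p (\<gamma>/2) \<subseteq> A \<and> A \<subseteq> closed_bowen_ball f t p \<gamma>)"

definition orbit_seg :: "(real \<Rightarrow> 'a \<Rightarrow> 'a) \<Rightarrow> real \<Rightarrow> 'a \<Rightarrow> 'a set" where
  "orbit_seg f s x = {f r x | r. r \<in> {-s..s}}"

definition Gamma_prod :: "(real \<Rightarrow> 'a::metric_space \<Rightarrow> 'a) \<Rightarrow> real \<Rightarrow> 'a \<times> 'a \<Rightarrow> ('a \<times> 'a) set" where
  "Gamma_prod f \<epsilon> p = {q. \<forall>t. dprod (pflow f t p) (pflow f t q) < \<epsilon>}"

definition NE_prod :: "(real \<Rightarrow> 'a::metric_space \<Rightarrow> 'a) \<Rightarrow> real \<Rightarrow> ('a \<times> 'a) set" where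
  "NE_prod f \<epsilon> = {p. \<not> (\<exists>s>0. Gamma_prod f \<epsilon> p \<subseteq> orbit_seg f s (fst p) \<times> orbit_seg f s (snd p))}"

definition product_expansive :: "(real \<Rightarrow> 'a::metric_space \<Rightarrow> 'a) \<Rightarrow> ('a \<times> 'a) measure \<Rightarrow> real \<Rightarrow> bool" where
  "product_expansive f \<nu> \<epsilon> \<longleftrightarrow> NE_prod f \<epsilon> \<in> null_sets \<nu>"

definition pflow_invariant :: "(real \<Rightarrow> 'a::metric_space \<Rightarrow> 'a) \<Rightarrow> ('a \<times> 'a) measure \<Rightarrow> bool" where
  "pflow_invariant f \<nu> \<longleftrightarrow>
     (\<forall>t. pflow f t \<in> measurable \<nu> \<nu> \<and> distr \<nu> \<nu> (pflow f t) = \<nu>)"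

end

theory Submission
  imports Defs
begin

lemma closed_regular_aux:
  fixes M :: "'b::metric_space measure"
  assumes fm: "finite_measure M" and sM: "sets M = sets borel" and B: "B \<in> sigma_sets UNIV {S. open S}"
  shows "\<forall>e>0. \<exists>F U. closed F \<and> open U \<and> F \<subseteq> B \<and> B \<subseteq> U \<and> measure M (U - F) \<le> e"
  using B
proof (induction rule: sigma_sets.induct)
  case (Basic S)
  then have oS: "open S" by simp
  show ?case
  proof (intro allI impI)
    fix e :: real assume e: "e > 0"
    show "\<exists>F U. closed F \<and> open U \<and> F \<subseteq> S \<and> S \<subseteq> U \<and> measure M (U - F) \<le> e"
    proof (cases "S = UNIV")
      case True
      then show ?thesis using e by (intro exI[of _ UNIV]) auto
    next
      case False
      define F where "F n = {x. 1 / real (Suc n) \<le> infdist x (- S)}" for n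
      have clF: "closed (F n)" for n
        unfolding F_def by (intro closed_Collect_le continuous_intros)
      have FS: "F n \<subseteq> S" for n
      proof
        fix x assume "x \<in> F n"
        then have "0 < infdist x (-S)" unfolding F_def
          by (metis less_le_trans of_nat_0_less_iff zero_less_Suc zero_less_divide_1_iff mem_Collect_eq)
        then show "x \<in> S" by (metis ComplI infdist_zero less_irrefl)
      qed
      have incF: "incseq F"
      unfolding incseq_def proof (intro allI impI subsetI)
        fix m n x assume mn: "m \<le> n" and "x \<in> F m"
        then have "1 / real (Suc m) \<le> infdist x (- S)" unfolding F_def by simp
        moreover have "1 / real (Suc n) \<le> 1 / real (Suc m)" using mn by (simp add: frac_le)
        ultimately show "x \<in> F n" unfolding F_def by simp
      qed
      have UF: "(\<Union>n. F n) = S"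
      proof
        show "(\<Union>n. F n) \<subseteq> S" using FS by auto
        show "S \<subseteq> (\<Union>n. F n)"
        proof
          fix x assume xS: "x \<in> S"
          have "closed (- S)" "- S \<noteq> {}" using oS False by auto
          then have "infdist x (-S) \<noteq> 0" using in_closed_iff_infdist_zero[of "-S" x] xS by auto
          then have pos: "infdist x (-S) > 0" using infdist_nonneg[of x "-S"] by linarith
          then obtain n where "1 / real (Suc n) < infdist x (-S)" using nat_approx_posE by blast
          then show "x \<in> (\<Union>n. F n)" unfolding F_def by (auto intro: less_imp_le)
        qed
      qed
      interpret finite_measure M by (rule fm)
      have sets: "range F \<subseteq> sets M" using clF sM by auto
      have "(\<lambda>n. measure M (F n)) \<longlonglongrightarrow> measure M S"
        using finite_Lim_measure_incseq[OF sets incF] UF by simp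
      from LIMSEQ_D[OF this e] obtain n where n: "\<bar>measure M (F n) - measure M S\<bar> < e"
        by auto
      have "measure M (S - F n) = measure M S - measure M (F n)"
        using finite_measure_Diff[of S "F n"] sM oS clF FS by auto
      then have m: "measure M (S - F n) \<le> e" using n by linarith
      show ?thesis using m clF[of n] oS FS[of n] by blast
    qed
  qed
next
  case Empty show ?case by (intro allI impI, rule exI[of _ "{}"], rule exI[of _ "{}"]) simp
next
  case (Compl a)
  show ?case
  proof (intro allI impI)
    fix e :: real assume "e > 0"
    with Compl.IH have "\<exists>F U. closed F \<and> open U \<and> F \<subseteq> a \<and> a \<subseteq> U \<and> measure M (U - F) \<le> e" by simp
    then obtain F U where FU: "closed F" "open U" "F \<subseteq> a" "a \<subseteq> U" "measure M (U - F) \<le> e"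
      by (elim exE conjE)
    have eq: "(-F) - (-U) = U - F" by blast
    have c: "closed (-U)" "open (-F)" using FU(1,2) by auto
    have s: "-U \<subseteq> UNIV - a" "UNIV - a \<subseteq> -F" using FU(3,4) by auto
    have m: "measure M (-F - -U) \<le> e" unfolding eq by (rule FU(5))
    show "\<exists>F' U'. closed F' \<and> open U' \<and> F' \<subseteq> UNIV - a \<and> UNIV - a \<subseteq> U' \<and> measure M (U' - F') \<le> e"
      using c s m by blast
  qed
next
  case (Union a)
  interpret finite_measure M by (rule fm)
  show ?case
  proof (intro allI impI)
    fix e :: real assume e: "e > 0"
    have ex: "\<exists>FU. closed (fst FU) \<and> open (snd FU) \<and> fst FU \<subseteq> a i \<and> a i \<subseteq> snd FU \<and> measure M (snd FU - fst FU) \<le> e / 2 * (1/2) ^ Suc i" for i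
    proof -
      have pos: "e / 2 * (1/2) ^ Suc i > 0" using e by simp
      have "\<exists>F U. closed F \<and> open U \<and> F \<subseteq> a i \<and> a i \<subseteq> U \<and> measure M (U - F) \<le> e / 2 * (1/2) ^ Suc i"
        by (rule mp[OF spec[OF Union.IH[of i]] pos])
      then obtain F U where "closed F \<and> open U \<and> F \<subseteq> a i \<and> a i \<subseteq> U \<and> measure M (U - F) \<le> e / 2 * (1/2) ^ Suc i"
        by (elim exE)
      then show ?thesis by (intro exI[of _ "(F, U)"]) simp
    qed
    have "\<forall>i. \<exists>FU. closed (fst FU) \<and> open (snd FU) \<and> fst FU \<subseteq> a i \<and> a i \<subseteq> snd FU \<and> measure M (snd FU - fst FU) \<le> e / 2 * (1/2) ^ Suc i"
      using ex by (intro allI)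
    then have "\<exists>FU. \<forall>i. closed (fst (FU i)) \<and> open (snd (FU i)) \<and> fst (FU i) \<subseteq> a i \<and> a i \<subseteq> snd (FU i) \<and> measure M (snd (FU i) - fst (FU i)) \<le> e / 2 * (1/2) ^ Suc i"
      by (rule choice)
    then obtain FU where FU': "\<forall>i. closed (fst (FU i)) \<and> open (snd (FU i)) \<and> fst (FU i) \<subseteq> a i \<and> a i \<subseteq> snd (FU i) \<and> measure M (snd (FU i) - fst (FU i)) \<le> e / 2 * (1/2) ^ Suc i"
      by (elim exE)
    note FU = FU'[rule_format]
    define F where "F i = fst (FU i)" for i
    define U where "U i = snd (FU i)" for i
    have clF: "closed (F i)" and oU: "open (U i)" and Fa: "F i \<subseteq> a i" and aU: "a i \<subseteq> U i"
      and mUF: "measure M (U i - F i) \<le> e / 2 * (1/2) ^ Suc i" for i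
      using FU[of i] unfolding F_def U_def by auto
    define G where "G N = (\<Union>i<N. F i)" for N
    have clG: "closed (G N)" for N unfolding G_def using clF by auto
    have incG: "incseq G" unfolding G_def incseq_def by (intro allI impI UN_mono) auto
    have UG: "(\<Union>N. G N) = (\<Union>i. F i)" unfolding G_def by auto
    have setsG: "range G \<subseteq> sets M" using clG sM by auto
    have "(\<lambda>N. measure M (G N)) \<longlonglongrightarrow> measure M (\<Union>i. F i)"
      using finite_Lim_measure_incseq[OF setsG incG] UG by simp
    from LIMSEQ_D[OF this] e obtain N where N: "\<bar>measure M (G N) - measure M (\<Union>i. F i)\<bar> < e / 2"
      by (metis half_gt_zero order_refl real_norm_def)
    have setsUF: "range (\<lambda>i. U i - F i) \<subseteq> sets M" using clF oU sM by auto
    have sumgeo: "(\<lambda>i. e / 2 * (1/2) ^ Suc i) sums (e / 2)"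
    proof -
      have "(\<lambda>i. (1/2::real) ^ Suc i) sums 1" using power_half_series .
      from sums_mult[OF this, of "e/2"] show ?thesis by simp
    qed
    have summ: "summable (\<lambda>i. measure M (U i - F i))"
      by (rule summable_comparison_test[OF _ sums_summable[OF sumgeo]]) (use mUF in auto)
    have m1: "measure M (\<Union>i. U i - F i) \<le> e / 2"
    proof -
      have "measure M (\<Union>i. U i - F i) \<le> (\<Sum>i. measure M (U i - F i))"
        by (rule finite_measure_subadditive_countably[OF setsUF summ])
      also have "\<dots> \<le> (\<Sum>i. e / 2 * (1/2) ^ Suc i)"
        by (rule suminf_le[OF mUF summ sums_summable[OF sumgeo]])
      also have "\<dots> = e / 2" using sumgeo sums_unique by metis
      finally show ?thesis .
    qed
    have UFmeas: "(\<Union>i. F i) \<in> sets M" using clF sM by auto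
    have m2: "measure M ((\<Union>i. F i) - G N) \<le> e / 2"
    proof -
      have "G N \<subseteq> (\<Union>i. F i)" using UG by blast
      then have "measure M ((\<Union>i. F i) - G N) = measure M (\<Union>i. F i) - measure M (G N)"
        using finite_measure_Diff[OF UFmeas _ \<open>G N \<subseteq> (\<Union>i. F i)\<close>] setsG by auto
      then show ?thesis using N by linarith
    qed
    have sub: "(\<Union>i. U i) - G N \<subseteq> (\<Union>i. U i - F i) \<union> ((\<Union>i. F i) - G N)" by blast
    have "measure M ((\<Union>i. U i) - G N) \<le> measure M ((\<Union>i. U i - F i) \<union> ((\<Union>i. F i) - G N))"
      by (rule finite_measure_mono[OF sub]) (use setsUF UFmeas setsG in auto)
    also have "\<dots> \<le> measure M (\<Union>i. U i - F i) + measure M ((\<Union>i. F i) - G N)"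
      by (rule measure_Un_le) (use setsUF UFmeas setsG in auto)
    also have "\<dots> \<le> e" using m1 m2 by linarith
    finally have "measure M ((\<Union>i. U i) - G N) \<le> e" .
    moreover have "G N \<subseteq> (\<Union>i. a i)" "(\<Union>i. a i) \<subseteq> (\<Union>i. U i)" using Fa aU unfolding G_def by blast+
    ultimately show "\<exists>F U. closed F \<and> open U \<and> F \<subseteq> (\<Union>i. a i) \<and> (\<Union>i. a i) \<subseteq> U \<and> measure M (U - F) \<le> e"
      using clG[of N] open_UN[of UNIV U] oU by blast
  qed
qed


lemma flow_cont:
  assumes "continuous_flow f" shows "continuous_on UNIV (f s)"
proof -
  have c: "continuous_on UNIV (\<lambda>(t, x). f t x)" using assms unfolding continuous_flow_def by simp
  have "continuous_on UNIV (\<lambda>x. (\<lambda>(t, x). f t x) (s, x))"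
    by (rule continuous_on_compose2[OF c]) (auto intro!: continuous_intros)
  then show ?thesis by simp
qed

lemma flow_isCont:
  assumes "continuous_flow f" shows "isCont (f s) x"
  using flow_cont[OF assms, of s] continuous_on_eq_continuous_at[of UNIV "f s"] by simp

lemma dprod_cont:
  assumes "continuous_flow f"
  shows "continuous_on UNIV (\<lambda>z. dprod (pflow f s (fst z)) (pflow f s (snd z)))"
proof -
  have fc: "\<And>x. isCont (f s) x" using flow_isCont[OF assms] .
  have "isCont (\<lambda>z. max (dist (f s (fst (fst z))) (f s (fst (snd z)))) (dist (f s (snd (fst z))) (f s (snd (snd z))))) z" for z :: "('a \<times> 'a) \<times> ('a \<times> 'a)"
    by (intro continuous_intros isCont_o2[OF _ fc])
  then show ?thesis unfolding dprod_def pflow_def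
    by (simp add: continuous_on_eq_continuous_at)
qed

lemma dprod_cont2:
  assumes "continuous_flow f"
  shows "continuous_on UNIV (\<lambda>q. dprod (pflow f s p) (pflow f s q))"
proof -
  have "continuous_on UNIV ((\<lambda>z. dprod (pflow f s (fst z)) (pflow f s (snd z))) \<circ> (\<lambda>q. (p, q)))"
    by (rule continuous_on_compose[OF _ continuous_on_subset[OF dprod_cont[OF assms]]]) (auto intro!: continuous_intros)
  then show ?thesis by (simp add: o_def)
qed

lemma dprod_sym: "dprod p q = dprod q p"
  unfolding dprod_def by (simp add: dist_commute)

lemma dprod_triangle: "dprod p r \<le> dprod p q + dprod q r"
proof -
  have "dist (fst p) (fst r) \<le> dist (fst p) (fst q) + dist (fst q) (fst r)" by (rule dist_triangle)
  moreover have "dist (snd p) (snd r) \<le> dist (snd p) (snd q) + dist (snd q) (snd r)" by (rule dist_triangle)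
  ultimately show ?thesis unfolding dprod_def by linarith
qed

lemma pflow_add:
  assumes "continuous_flow f" shows "pflow f (s + t) p = pflow f s (pflow f t p)"
  using assms unfolding continuous_flow_def pflow_def by simp

lemma pflow_zero:
  assumes "continuous_flow f" shows "pflow f 0 p = p"
  using assms unfolding continuous_flow_def pflow_def by simp


theorem proposition4p7:
  fixes f :: "real \<Rightarrow> 'a::metric_space \<Rightarrow> 'a"
    and \<nu> :: "('a \<times> 'a) measure"
    and \<epsilon> \<gamma> :: real
    and \<A> :: "real \<Rightarrow> ('a \<times> 'a) set set"
    and Q :: "('a \<times> 'a) set"
  assumes "compact (UNIV :: 'a set)"
    and "continuous_flow f"
    and "prob_space \<nu>"
    and "sets \<nu> = sets borel"
    and "pflow_invariant f \<nu>"
    and "product_expansive f \<nu> \<epsilon>"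
    and "0 < \<gamma>" and "\<gamma> < \<epsilon> / 2"
    and "\<forall>t>0. \<exists>E. max_card_separated f t \<gamma> E \<and> adapted_partition f t \<gamma> E (\<A> t)"
    and "Q \<in> sets \<nu>"
    and "\<forall>t s. (\<lambda>(x, y). (f t x, f s y)) ` Q = Q"
  shows "\<forall>\<alpha>>0. \<exists>t0. \<forall>t\<ge>t0. \<exists>S\<subseteq>\<A> t. measure \<nu> ((\<Union>S - Q) \<union> (Q - \<Union>S)) < \<alpha>"
proof (intro allI impI)
  fix \<alpha> :: real assume \<alpha>: "\<alpha> > 0"
  note cpt = assms(1) and fl = assms(2) and sN = assms(4) and Qm = assms(10) and Qinv = assms(11)
  interpret prob_space \<nu> by (rule assms(3))
  have spN: "space \<nu> = UNIV" using sN by (metis sets_eq_imp_space_eq space_borel)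
  have cptP: "compact (UNIV :: ('a \<times> 'a) set)"
    using compact_Times[OF cpt cpt] by (simp add: UNIV_Times_UNIV[symmetric] del: UNIV_Times_UNIV)
  have cptPP: "compact (UNIV :: (('a \<times> 'a) \<times> ('a \<times> 'a)) set)"
    using compact_Times[OF cptP cptP] by (simp add: UNIV_Times_UNIV[symmetric] del: UNIV_Times_UNIV)
  have NE: "NE_prod f \<epsilon> \<in> sets \<nu>" "measure \<nu> (NE_prod f \<epsilon>) = 0"
    using assms(6) unfolding product_expansive_def by (auto simp: null_sets_def emeasure_eq_measure)
  have inv: "pflow f t \<in> measurable \<nu> \<nu>" "distr \<nu> \<nu> (pflow f t) = \<nu>" for t
    using assms(5) unfolding pflow_invariant_def by auto
  have pres: "measure \<nu> (pflow f t -` B) = measure \<nu> B" if "B \<in> sets \<nu>" for t B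
    using measure_distr[OF inv(1) that, of t] inv(2)[of t] spN by simp
  have presm: "pflow f t -` B \<in> sets \<nu>" if "B \<in> sets \<nu>" for t B
    using measurable_sets[OF inv(1) that, of t] spN by simp
  have Qfwd: "pflow f t x \<in> Q" if "x \<in> Q" for t x
  proof -
    have "(\<lambda>(x, y). (f t x, f t y)) x \<in> (\<lambda>(x, y). (f t x, f t y)) ` Q" using that by (rule imageI)
    then show ?thesis using Qinv unfolding pflow_def by (simp add: case_prod_beta)
  qed
  have Qback: "x \<in> Q" if "pflow f t x \<in> Q" for t x
  proof -
    have "pflow f (-t) (pflow f t x) \<in> Q" using Qfwd[OF that] .
    then show ?thesis using pflow_add[OF fl, of "-t" t x] pflow_zero[OF fl, of x] by simp
  qed
  have sig: "-Q \<in> sigma_sets UNIV {S. open S}" using Qm sN sets_borel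
    by (metis Compl_eq_Diff_UNIV sets.compl_sets spN)
  have pos4: "\<alpha> / 4 > 0" using \<alpha> by simp
  have ex: "\<exists>F U. closed F \<and> open U \<and> F \<subseteq> -Q \<and> -Q \<subseteq> U \<and> measure \<nu> (U - F) \<le> \<alpha> / 4"
    by (rule mp[OF spec[OF closed_regular_aux[OF finite_measure_axioms sN sig]] pos4])
  then obtain L where "\<exists>U. closed L \<and> open U \<and> L \<subseteq> -Q \<and> -Q \<subseteq> U \<and> measure \<nu> (U - L) \<le> \<alpha> / 4"
    by (rule exE)
  then obtain U where LU0: "closed L \<and> open U \<and> L \<subseteq> -Q \<and> -Q \<subseteq> U \<and> measure \<nu> (U - L) \<le> \<alpha> / 4"
    by (rule exE)
  have LU: "closed L" "open U" "L \<subseteq> -Q" "-Q \<subseteq> U" "measure \<nu> (U - L) \<le> \<alpha> / 4"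
    using LU0 by simp_all
  have Lm: "L \<in> sets \<nu>" using LU(1) sN by simp
  have mL: "measure \<nu> (-Q - L) \<le> \<alpha> / 4"
  proof -
    have "measure \<nu> (-Q - L) \<le> measure \<nu> (U - L)"
      by (rule finite_measure_mono) (use LU sN in auto)
    then show ?thesis using LU(5) by linarith
  qed
  have cptL: "compact L" using compact_Int_closed[OF cptP LU(1)] by simp
  define C where "C n p = {q. \<forall>s\<in>{- real n..real n}. dprod (pflow f s p) (pflow f s q) \<le> 2 * \<gamma>}" for n :: nat and p
  define Bad where "Bad n = {p. \<exists>q\<in>L. q \<in> C n p}" for n
  define Gs where "Gs n = Q - Bad n" for n
  have C_anti: "C m p \<subseteq> C n p" if "n \<le> m" for n m p
    unfolding C_def using that by auto
  have C_closed: "closed (C n p)" for n p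
  proof -
    have "C n p = (\<Inter>s\<in>{- real n..real n}. {q. dprod (pflow f s p) (pflow f s q) \<le> 2 * \<gamma>})"
      unfolding C_def by auto
    moreover have "closed {q. dprod (pflow f s p) (pflow f s q) \<le> 2 * \<gamma>}" for s
      by (rule closed_Collect_le[OF dprod_cont2[OF fl, of s p] continuous_on_const])
    ultimately show ?thesis by auto
  qed
  have Bad_closed: "closed (Bad n)" for n
  proof -
    define Z where "Z = {z. snd z \<in> L \<and> (\<forall>s\<in>{- real n..real n}. dprod (pflow f s (fst z)) (pflow f s (snd z)) \<le> 2 * \<gamma>)}"
    have "Z = (UNIV \<times> L) \<inter> (\<Inter>s\<in>{- real n..real n}. {z. dprod (pflow f s (fst z)) (pflow f s (snd z)) \<le> 2 * \<gamma>})"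
      unfolding Z_def by auto
    moreover have "closed {z. dprod (pflow f s (fst z)) (pflow f s (snd z)) \<le> 2 * \<gamma>}" for s
      by (rule closed_Collect_le[OF dprod_cont[OF fl, of s] continuous_on_const])
    ultimately have "closed Z" using LU(1) by (auto intro!: closed_Times)
    then have "compact Z" using compact_Int_closed[OF cptPP] by (metis inf_top.left_neutral)
    then have "compact (fst ` Z)" by (intro compact_continuous_image continuous_intros)
    moreover have "fst ` Z = Bad n"
    proof
      show "fst ` Z \<subseteq> Bad n"
      proof
        fix p assume "p \<in> fst ` Z"
        then obtain z where z: "z \<in> Z" "p = fst z" by blast
        then have "snd z \<in> L" "snd z \<in> C n p" unfolding Z_def C_def by auto
        then show "p \<in> Bad n" unfolding Bad_def by blast
      qed
      show "Bad n \<subseteq> fst ` Z"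
      proof
        fix p assume "p \<in> Bad n"
        then obtain q where "q \<in> L" "q \<in> C n p" unfolding Bad_def by blast
        then have "(p, q) \<in> Z" unfolding Z_def C_def by simp
        then show "p \<in> fst ` Z" by (metis fst_conv imageI)
      qed
    qed
    ultimately show ?thesis by (metis compact_imp_closed)
  qed
  have Gsm: "Gs n \<in> sets \<nu>" for n
    unfolding Gs_def using Qm Bad_closed[of n] sN by auto
  have Gs_inc: "incseq Gs"
    unfolding incseq_def Gs_def Bad_def using C_anti by blast
  have cover: "Q - NE_prod f \<epsilon> \<subseteq> (\<Union>n. Gs n)"
  proof
    fix p assume p: "p \<in> Q - NE_prod f \<epsilon>"
    show "p \<in> (\<Union>n. Gs n)"
    proof (rule ccontr)
      assume "p \<notin> (\<Union>n. Gs n)"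
      then have bad: "p \<in> Bad n" for n using p unfolding Gs_def by blast
      from p obtain s0 where s0: "s0 > 0" "Gamma_prod f \<epsilon> p \<subseteq> orbit_seg f s0 (fst p) \<times> orbit_seg f s0 (snd p)"
        unfolding NE_prod_def by blast
      have "L \<inter> (\<Inter>n\<in>UNIV. C n p) \<noteq> {}"
      proof (rule compact_imp_fip_image[OF cptL])
        show "closed (C n p)" for n by (rule C_closed)
        fix I' :: "nat set" assume fI: "finite I'"
        define m where "m = Max (insert 0 I')"
        have "i \<le> m" if "i \<in> I'" for i unfolding m_def using fI that by simp
        then have "C m p \<subseteq> (\<Inter>i\<in>I'. C i p)" using C_anti by blast
        moreover obtain q where "q \<in> L" "q \<in> C m p" using bad[of m] unfolding Bad_def by blast
        ultimately show "L \<inter> (\<Inter>i\<in>I'. C i p) \<noteq> {}" by blast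
      qed
      then obtain q where q: "q \<in> L" "\<And>n. q \<in> C n p" by blast
      have "q \<in> Gamma_prod f \<epsilon> p"
        unfolding Gamma_prod_def
      proof (intro CollectI allI)
        fix s :: real
        obtain n :: nat where "\<bar>s\<bar> \<le> real n" using real_arch_simple by blast
        then have "s \<in> {- real n..real n}" by auto
        then have "dprod (pflow f s p) (pflow f s q) \<le> 2 * \<gamma>" using q(2)[of n] unfolding C_def by blast
        then show "dprod (pflow f s p) (pflow f s q) < \<epsilon>" using assms(8) by linarith
      qed
      then have "q \<in> orbit_seg f s0 (fst p) \<times> orbit_seg f s0 (snd p)" using s0 by blast
      then have "fst q \<in> orbit_seg f s0 (fst p)" "snd q \<in> orbit_seg f s0 (snd p)" by (auto simp: mem_Times_iff)
      then obtain r1 r2 where r: "fst q = f r1 (fst p)" "snd q = f r2 (snd p)" unfolding orbit_seg_def by blast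
      then have "q = (\<lambda>(x, y). (f r1 x, f r2 y)) p" by (simp add: case_prod_beta prod_eq_iff)
      then have "q \<in> (\<lambda>(x, y). (f r1 x, f r2 y)) ` Q" using p by blast
      then have "q \<in> Q" using Qinv by simp
      then show False using q(1) LU(3) by blast
    qed
  qed
  have lim: "(\<lambda>n. measure \<nu> (Gs n)) \<longlonglongrightarrow> measure \<nu> (\<Union>n. Gs n)"
    using finite_Lim_measure_incseq[OF _ Gs_inc] Gsm by auto
  have UGm: "(\<Union>n. Gs n) \<in> sets \<nu>" using Gsm by auto
  have mQ: "measure \<nu> Q \<le> measure \<nu> (\<Union>n. Gs n)"
  proof -
    have "measure \<nu> Q \<le> measure \<nu> ((\<Union>n. Gs n) \<union> NE_prod f \<epsilon>)"
      by (rule finite_measure_mono) (use cover UGm NE in auto)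
    also have "\<dots> \<le> measure \<nu> (\<Union>n. Gs n) + measure \<nu> (NE_prod f \<epsilon>)"
      by (rule measure_Un_le) (use UGm NE in auto)
    finally show ?thesis using NE by simp
  qed
  have "\<alpha> / 4 > 0" using \<alpha> by simp
  from LIMSEQ_D[OF lim this] obtain N where N: "\<bar>measure \<nu> (Gs N) - measure \<nu> (\<Union>n. Gs n)\<bar> < \<alpha> / 4"
    by (metis order_refl real_norm_def)
  have mG: "measure \<nu> (Q - Gs N) < \<alpha> / 4"
  proof -
    have "measure \<nu> (Q - Gs N) = measure \<nu> Q - measure \<nu> (Gs N)"
      by (rule finite_measure_Diff) (use Qm Gsm in \<open>auto simp: Gs_def\<close>)
    then show ?thesis using N mQ by linarith
  qed
  show "\<exists>t0. \<forall>t\<ge>t0. \<exists>S\<subseteq>\<A> t. measure \<nu> ((\<Union>S - Q) \<union> (Q - \<Union>S)) < \<alpha>"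
  proof (rule exI[of _ "2 * real N + 1"], intro allI impI)
    fix t :: real assume t: "2 * real N + 1 \<le> t"
    then have "t > 0" by simp
    then obtain E where E: "adapted_partition f t \<gamma> E (\<A> t)" using assms(9) by blast
    define T where "T = t / 2"
    define \<psi> where "\<psi> = pflow f T"
    define G where "G = \<psi> -` Gs N"
    define S where "S = {A \<in> \<A> t. A \<inter> G \<noteq> {}}"
    from E have cov: "\<Union>(\<A> t) = UNIV"
      and balls: "\<forall>A\<in>\<A> t. \<exists>p\<in>E. bowen_ball f t p (\<gamma>/2) \<subseteq> A \<and> A \<subseteq> closed_bowen_ball f t p \<gamma>"
      unfolding adapted_partition_def by auto
    have TN: "real N \<le> T" "T + real N \<le> t" using t unfolding T_def by auto
    have key: "\<psi> x \<notin> L" if "x \<in> \<Union>S" for x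
    proof
      assume xL: "\<psi> x \<in> L"
      from that obtain A where A: "A \<in> \<A> t" "x \<in> A" "A \<inter> G \<noteq> {}" unfolding S_def by blast
      then obtain p where p: "p \<in> A" "p \<in> G" by blast
      from balls A(1) have "\<exists>p\<in>E. bowen_ball f t p (\<gamma>/2) \<subseteq> A \<and> A \<subseteq> closed_bowen_ball f t p \<gamma>"
        by (rule bspec)
      then obtain c where c: "A \<subseteq> closed_bowen_ball f t c \<gamma>" by (elim bexE conjE)
      have cb: "dprod (pflow f r c) (pflow f r y) \<le> \<gamma>" if "y \<in> A" "r \<in> {0..t}" for y r
      proof -
        from c that(1) have "y \<in> closed_bowen_ball f t c \<gamma>" by (rule subsetD)
        then have "\<forall>s\<in>{0..t}. dprod (pflow f s c) (pflow f s y) \<le> \<gamma>" unfolding closed_bowen_ball_def by simp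
        then show ?thesis using that(2) by (rule bspec)
      qed
      have "\<psi> x \<in> C N (\<psi> p)" unfolding C_def
      proof (intro CollectI ballI)
        fix s assume s: "s \<in> {- real N..real N}"
        then have st: "s + T \<in> {0..t}" using TN by auto
        have "dprod (pflow f (s+T) c) (pflow f (s+T) p) \<le> \<gamma>" "dprod (pflow f (s+T) c) (pflow f (s+T) x) \<le> \<gamma>"
          using cb[OF p(1) st] cb[OF A(2) st] by auto
        then have "dprod (pflow f (s+T) p) (pflow f (s+T) x) \<le> 2 * \<gamma>"
          using dprod_triangle[of "pflow f (s+T) p" "pflow f (s+T) x" "pflow f (s+T) c"]
            dprod_sym[of "pflow f (s+T) p" "pflow f (s+T) c"] by linarith
        then show "dprod (pflow f s (\<psi> p)) (pflow f s (\<psi> x)) \<le> 2 * \<gamma>"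
          unfolding \<psi>_def by (simp add: pflow_add[OF fl, symmetric])
      qed
      then have "\<psi> p \<in> Bad N" using xL unfolding Bad_def by blast
      moreover have "\<psi> p \<in> Gs N" using p(2) unfolding G_def by simp
      ultimately show False unfolding Gs_def by blast
    qed
    have sub: "(\<Union>S - Q) \<union> (Q - \<Union>S) \<subseteq> \<psi> -` ((Q - Gs N) \<union> (-Q - L))"
    proof
      fix x assume "x \<in> (\<Union>S - Q) \<union> (Q - \<Union>S)"
      then show "x \<in> \<psi> -` ((Q - Gs N) \<union> (-Q - L))"
      proof
        assume x: "x \<in> \<Union>S - Q"
        have "\<psi> x \<notin> Q" using x Qback unfolding \<psi>_def by blast
        moreover have "\<psi> x \<notin> L" using key x by blast
        ultimately show ?thesis by simp
      next
        assume x: "x \<in> Q - \<Union>S"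
        have "x \<notin> G"
        proof
          assume xG: "x \<in> G"
          have "x \<in> \<Union>(\<A> t)" using cov by simp
          then obtain A where A: "A \<in> \<A> t" "x \<in> A" by (rule UnionE)
          then have "A \<in> S" using xG unfolding S_def by blast
          then show False using x A(2) by blast
        qed
        then have "\<psi> x \<notin> Gs N" unfolding G_def by simp
        moreover have "\<psi> x \<in> Q" using x Qfwd unfolding \<psi>_def by blast
        ultimately show ?thesis by simp
      qed
    qed
    have nQ: "-Q \<in> sets \<nu>" using sets.compl_sets[OF Qm] spN by (simp add: Compl_eq_Diff_UNIV)
    have Wm: "(Q - Gs N) \<union> (-Q - L) \<in> sets \<nu>" using Qm Gsm[of N] Lm nQ by (intro sets.Un sets.Diff)
    have Ssub: "S \<subseteq> \<A> t" unfolding S_def by blast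
    have "measure \<nu> ((\<Union>S - Q) \<union> (Q - \<Union>S)) \<le> measure \<nu> (\<psi> -` ((Q - Gs N) \<union> (-Q - L)))"
      by (rule finite_measure_mono[OF sub]) (unfold \<psi>_def, rule presm[OF Wm])
    also have "\<dots> = measure \<nu> ((Q - Gs N) \<union> (-Q - L))" unfolding \<psi>_def by (rule pres[OF Wm])
    also have "\<dots> \<le> measure \<nu> (Q - Gs N) + measure \<nu> (-Q - L)"
      by (rule measure_Un_le) (use Qm Gsm[of N] Lm nQ in \<open>auto intro: sets.Diff\<close>)
    also have "\<dots> < \<alpha>" using mG mL \<alpha> by linarith
    finally have m: "measure \<nu> ((\<Union>S - Q) \<union> (Q - \<Union>S)) < \<alpha>" .
    show "\<exists>S\<subseteq>\<A> t. measure \<nu> ((\<Union>S - Q) \<union> (Q - \<Union>S)) < \<alpha>"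
      by (intro exI[of _ S] conjI Ssub m)
  qed
qed

end
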